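(* Let $0<\nu<1$ and let $R,S,T,U>0$ satisfy \[ S=\frac{18}{-\nu^2+\nu+2}-R,\quad T=\tfrac{1}{18}\big(9-(\nu+1)R((\nu-2)R+6)\big),\quad U=\tfrac{1}{18}\Big(-(\nu-2)(\nu+1)R^2-6(\nu+4)R+\frac{9(\nu-14)}{\nu-2}\Big). \] For $\theta\in\mathbb{R}$ let \[ A(\theta)=\begin{pmatrix} 1-\nu\big(1+(1-\nu)(U-T)\big)(1-e^{-I\theta}) & \nu(1-\nu)(Ue^{-I\theta}-T)(1-e^{-I\theta})\\ \nu(1-\nu)(R+S) & (1-\nu)(1-\nu R)+\nu\big(1-(1-\nu)S\big)e^{-I\theta} \end{pmatrix}, \] where $I$ is the imaginary unit, and let $\lambda_1(\theta)$ be the eigenvalue of $A(\theta)$ depending analytically on $\theta$ near $0$ with $\lambda_1(0)=1$. Then \[ \lambda_1(\theta)-e^{-I\nu\theta}=\frac{1}{540}\,I\,\nu\,(2\nu^4-5\nu^3+5\nu-2)\,\theta^5+O(\theta^6)\quad(\theta\to0). \]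
   Context: $A(\theta)$ is the amplification matrix, acting on Fourier amplitudes $(\hat Q,\hat q)$ of cell averages and interface point values, of the following parameterized Active Flux scheme for $q_t+aq_x=0$, $a>0$, on a uniform grid with cells $[x_{i-1/2},x_{i+1/2}]$ of width $\Delta x$ and Courant number $\nu=a\Delta t/\Delta x$: $q^{n+1}_{i+1/2}=(1-\nu)q^n_{i+1/2}+\nu q^n_{i-1/2}-\nu(1-\nu)\big(R(q^n_{i+1/2}-Q^n_i)-S(Q^n_i-q^n_{i-1/2})\big)$, $\bar q_{i+1/2}=Q^n_i+(1-\nu)\big(T(q^n_{i+1/2}-Q^n_i)+U(Q^n_i-q^n_{i-1/2})\big)$, $Q^{n+1}_i=Q^n_i-\nu(\bar q_{i+1/2}-\bar q_{i-1/2})$. The exact amplification factor is $e^{-I\nu\theta}$. At $\theta=0$ the two eigenvalues of $A$ are $1$ and $1-\nu(1-\nu)(R+S)\neq1$, so $\lambda_1$ is well defined near $\theta=0$. *)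

theory Defs
  imports "HOL-Analysis.Analysis" "HOL-Library.Landau_Symbols"
begin

definition AF_matrix :: "real \<Rightarrow> real \<Rightarrow> real \<Rightarrow> real \<Rightarrow> real \<Rightarrow> real \<Rightarrow> complex^2^2" where
  "AF_matrix \<nu> R S T U \<theta> =
     (let z = exp (- \<i> * complex_of_real \<theta>);
          n = complex_of_real \<nu>; r = complex_of_real R; s = complex_of_real S;
          t = complex_of_real T; u = complex_of_real U in
     vector [
       vector [1 - n * (1 + (1 - n) * (u - t)) * (1 - z),
               n * (1 - n) * (u * z - t) * (1 - z)],
       vector [n * (1 - n) * (r + s),
               (1 - n) * (1 - n * r) + n * (1 - (1 - n) * s) * z]])"

definition is_eigenvalue :: "complex^'n^'n \<Rightarrow> complex \<Rightarrow> bool" where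
  "is_eigenvalue M \<mu> \<longleftrightarrow> (\<exists>v. v \<noteq> 0 \<and> M *v v = \<mu> *s v)"

end

theory Submission
  imports Defs
begin

definition "a0c (n::complex) (r::complex) (s::complex) (t::complex) (u::complex) = 1 - n*(1+(1-n)*(u-t))"
definition "a1c (n::complex) (r::complex) (s::complex) (t::complex) (u::complex) = n*(1+(1-n)*(u-t))"
definition "d0c (n::complex) (r::complex) (s::complex) (t::complex) (u::complex) = (1-n)*(1-n*r)"
definition "d1c (n::complex) (r::complex) (s::complex) (t::complex) (u::complex) = n*(1-(1-n) * s)"
definition "Kc (n::complex) (r::complex) (s::complex) (t::complex) (u::complex) = n*n*(1-n)^2*(r+s)"
definition "P0c n r s t u = a0c n r s t u + d0c n r s t u"
definition "P1c n r s t u = a1c n r s t u + d1c n r s t u"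
definition "D0c n r s t u = a0c n r s t u * d0c n r s t u + Kc n r s t u * t"
definition "D1c n r s t u = a0c n r s t u * d1c n r s t u + a1c n r s t u * d0c n r s t u - Kc n r s t u * (u+t)"
definition "D2c n r s t u = a1c n r s t u * d1c n r s t u + Kc n r s t u * u"
lemmas coef_defs = a0c_def a1c_def d0c_def d1c_def Kc_def P0c_def P1c_def D0c_def D1c_def D2c_def

definition pc :: "complex \<Rightarrow> complex \<Rightarrow> complex \<Rightarrow> complex \<Rightarrow> complex \<Rightarrow> complex \<Rightarrow> complex \<Rightarrow> complex" where
  "pc n r s t u \<mu> w = \<mu>^2 - (P0c n r s t u + P1c n r s t u * w) * \<mu> + D0c n r s t u + D1c n r s t u * w + D2c n r s t u * w^2"

lemma gen_id0:
  fixes x e0 e1 e2 e3 e4 e5 z0 z1 z2 z3 z4 z5 P0 P1 D0 D1 D2 :: complex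
  assumes h0: "(e0*e0 - P0*e0 - P1*(z0*e0) + D0 + D1*z0 + D2*(z0*z0)) = 0"
  and h1: "(e0*e1 + e1*e0 - P0*e1 - P1*(z0*e1 + z1*e0) + D1*z1 + D2*(z0*z1 + z1*z0)) = 0"
  and h2: "(e0*e2 + e1*e1 + e2*e0 - P0*e2 - P1*(z0*e2 + z1*e1 + z2*e0) + D1*z2 + D2*(z0*z2 + z1*z1 + z2*z0)) = 0"
  and h3: "(e0*e3 + e1*e2 + e2*e1 + e3*e0 - P0*e3 - P1*(z0*e3 + z1*e2 + z2*e1 + z3*e0) + D1*z3 + D2*(z0*z3 + z1*z2 + z2*z1 + z3*z0)) = 0"
  and h4: "(e0*e4 + e1*e3 + e2*e2 + e3*e1 + e4*e0 - P0*e4 - P1*(z0*e4 + z1*e3 + z2*e2 + z3*e1 + z4*e0) + D1*z4 + D2*(z0*z4 + z1*z3 + z2*z2 + z3*z1 + z4*z0)) = 0"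
  and h5: "(e0*e5 + e1*e4 + e2*e3 + e3*e2 + e4*e1 + e5*e0 - P0*e5 - P1*(z0*e5 + z1*e4 + z2*e3 + z3*e2 + z4*e1 + z5*e0) + D1*z5 + D2*(z0*z5 + z1*z4 + z2*z3 + z3*z2 + z4*z1 + z5*z0)) = 0"
  shows "(e0 + e1*x + e2*x^2 + e3*x^3 + e4*x^4 + e5*x^5)^2 - (P0 + P1*(z0 + z1*x + z2*x^2 + z3*x^3 + z4*x^4 + z5*x^5))*(e0 + e1*x + e2*x^2 + e3*x^3 + e4*x^4 + e5*x^5) + D0 + D1*(z0 + z1*x + z2*x^2 + z3*x^3 + z4*x^4 + z5*x^5) + D2*(z0 + z1*x + z2*x^2 + z3*x^3 + z4*x^4 + z5*x^5)^2 = x^6 * (x^0*(e1*e5 + e2*e4 + e3*e3 + e4*e2 + e5*e1 - P1*(z1*e5 + z2*e4 + z3*e3 + z4*e2 + z5*e1) + D2*(z1*z5 + z2*z4 + z3*z3 + z4*z2 + z5*z1)) + x^1*(e2*e5 + e3*e4 + e4*e3 + e5*e2 - P1*(z2*e5 + z3*e4 + z4*e3 + z5*e2) + D2*(z2*z5 + z3*z4 + z4*z3 + z5*z2)) + x^2*(e3*e5 + e4*e4 + e5*e3 - P1*(z3*e5 + z4*e4 + z5*e3) + D2*(z3*z5 + z4*z4 + z5*z3)) + x^3*(e4*e5 + e5*e4 - P1*(z4*e5 + z5*e4) + D2*(z4*z5 + z5*z4)) + x^4*(e5*e5 - P1*(z5*e5) + D2*(z5*z5)))"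
proof -
  have "(e0 + e1*x + e2*x^2 + e3*x^3 + e4*x^4 + e5*x^5)^2 - (P0 + P1*(z0 + z1*x + z2*x^2 + z3*x^3 + z4*x^4 + z5*x^5))*(e0 + e1*x + e2*x^2 + e3*x^3 + e4*x^4 + e5*x^5) + D0 + D1*(z0 + z1*x + z2*x^2 + z3*x^3 + z4*x^4 + z5*x^5) + D2*(z0 + z1*x + z2*x^2 + z3*x^3 + z4*x^4 + z5*x^5)^2 = x^0*(e0*e0 - P0*e0 - P1*(z0*e0) + D0 + D1*z0 + D2*(z0*z0)) + x^1*(e0*e1 + e1*e0 - P0*e1 - P1*(z0*e1 + z1*e0) + D1*z1 + D2*(z0*z1 + z1*z0)) + x^2*(e0*e2 + e1*e1 + e2*e0 - P0*e2 - P1*(z0*e2 + z1*e1 + z2*e0) + D1*z2 + D2*(z0*z2 + z1*z1 + z2*z0)) + x^3*(e0*e3 + e1*e2 + e2*e1 + e3*e0 - P0*e3 - P1*(z0*e3 + z1*e2 + z2*e1 + z3*e0) + D1*z3 + D2*(z0*z3 + z1*z2 + z2*z1 + z3*z0)) + x^4*(e0*e4 + e1*e3 + e2*e2 + e3*e1 + e4*e0 - P0*e4 - P1*(z0*e4 + z1*e3 + z2*e2 + z3*e1 + z4*e0) + D1*z4 + D2*(z0*z4 + z1*z3 + z2*z2 + z3*z1 + z4*z0)) + x^5*(e0*e5 + e1*e4 + e2*e3 + e3*e2 + e4*e1 + e5*e0 - P0*e5 - P1*(z0*e5 + z1*e4 + z2*e3 + z3*e2 + z4*e1 + z5*e0)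 + D1*z5 + D2*(z0*z5 + z1*z4 + z2*z3 + z3*z2 + z4*z1 + z5*z0)) + x^6 * (x^0*(e1*e5 + e2*e4 + e3*e3 + e4*e2 + e5*e1 - P1*(z1*e5 + z2*e4 + z3*e3 + z4*e2 + z5*e1) + D2*(z1*z5 + z2*z4 + z3*z3 + z4*z2 + z5*z1)) + x^1*(e2*e5 + e3*e4 + e4*e3 + e5*e2 - P1*(z2*e5 + z3*e4 + z4*e3 + z5*e2) + D2*(z2*z5 + z3*z4 + z4*z3 + z5*z2)) + x^2*(e3*e5 + e4*e4 + e5*e3 - P1*(z3*e5 + z4*e4 + z5*e3) + D2*(z3*z5 + z4*z4 + z5*z3)) + x^3*(e4*e5 + e5*e4 - P1*(z4*e5 + z5*e4) + D2*(z4*z5 + z5*z4)) + x^4*(e5*e5 - P1*(z5*e5) + D2*(z5*z5)))"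
    by algebra
  also have "\<dots> = x^6 * (x^0*(e1*e5 + e2*e4 + e3*e3 + e4*e2 + e5*e1 - P1*(z1*e5 + z2*e4 + z3*e3 + z4*e2 + z5*e1) + D2*(z1*z5 + z2*z4 + z3*z3 + z4*z2 + z5*z1)) + x^1*(e2*e5 + e3*e4 + e4*e3 + e5*e2 - P1*(z2*e5 + z3*e4 + z4*e3 + z5*e2) + D2*(z2*z5 + z3*z4 + z4*z3 + z5*z2)) + x^2*(e3*e5 + e4*e4 + e5*e3 - P1*(z3*e5 + z4*e4 + z5*e3) + D2*(z3*z5 + z4*z4 + z5*z3)) + x^3*(e4*e5 + e5*e4 - P1*(z4*e5 + z5*e4) + D2*(z4*z5 + z5*z4)) + x^4*(e5*e5 - P1*(z5*e5) + D2*(z5*z5)))"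
    by (simp only: h0 h1 h2 h3 h4 h5 mult_zero_right add_0_left)
  finally show ?thesis .
qed

lemma ck0:
  fixes n r s t u :: complex
  assumes hs: "s = 18 / ((2 - n) * (n + 1)) - r"
    and ht: "t = (9 - (n + 1) * r * ((n - 2) * r + 6)) / 18"
    and hu: "u = (- (n - 2) * (n + 1) * r ^ 2 - 6 * (n + 4) * r + 9 * (n - 14) / (n - 2)) / 18"
    and hn2: "n \<noteq> 2" and hn1: "n + 1 \<noteq> 0"
  shows "(1*1 - P0c n r s t u*1 - P1c n r s t u*(1*1) + D0c n r s t u + D1c n r s t u*1 + D2c n r s t u*(1*1)) = 0"
  unfolding coef_defs by algebra

lemma ck1:
  fixes n r s t u :: complex
  assumes hs: "s = 18 / ((2 - n) * (n + 1)) - r"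
    and ht: "t = (9 - (n + 1) * r * ((n - 2) * r + 6)) / 18"
    and hu: "u = (- (n - 2) * (n + 1) * r ^ 2 - 6 * (n + 4) * r + 9 * (n - 14) / (n - 2)) / 18"
    and hn2: "n \<noteq> 2" and hn1: "n + 1 \<noteq> 0"
  shows "(1*n + n*1 - P0c n r s t u*n - P1c n r s t u*(1*n + 1*1) + D1c n r s t u*1 + D2c n r s t u*(1*1 + 1*1)) = 0"
  unfolding coef_defs by algebra

lemma ck2:
  fixes n r s t u :: complex
  assumes hs: "s = 18 / ((2 - n) * (n + 1)) - r"
    and ht: "t = (9 - (n + 1) * r * ((n - 2) * r + 6)) / 18"
    and hu: "u = (- (n - 2) * (n + 1) * r ^ 2 - 6 * (n + 4) * r + 9 * (n - 14) / (n - 2)) / 18"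
    and hn2: "n \<noteq> 2" and hn1: "n + 1 \<noteq> 0"
  shows "(1*(n^2/2) + n*n + (n^2/2)*1 - P0c n r s t u*(n^2/2) - P1c n r s t u*(1*(n^2/2) + 1*n + (1/2)*1) + D1c n r s t u*(1/2) + D2c n r s t u*(1*(1/2) + 1*1 + (1/2)*1)) = 0"
proof -
  define d1 where "d1 = (2 - n) * (n + 1)"
  define d2 where "d2 = n - 2"
  have d1nz: "d1 \<noteq> 0" using hn2 hn1 unfolding d1_def by simp
  have d2nz: "d2 \<noteq> 0" using hn2 unfolding d2_def by simp
  have hs': "s = 18 / d1 - r" using hs unfolding d1_def by simp
  have hu': "u = (- (n - 2) * (n + 1) * r ^ 2 - 6 * (n + 4) * r + 9 * (n - 14) / d2) / 18" using hu unfolding d2_def by simp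
  show ?thesis unfolding coef_defs hs' hu' ht using d1nz d2nz
    apply (simp add: field_simps)
    unfolding d1_def d2_def by algebra
qed

lemma ck3:
  fixes n r s t u :: complex
  assumes hs: "s = 18 / ((2 - n) * (n + 1)) - r"
    and ht: "t = (9 - (n + 1) * r * ((n - 2) * r + 6)) / 18"
    and hu: "u = (- (n - 2) * (n + 1) * r ^ 2 - 6 * (n + 4) * r + 9 * (n - 14) / (n - 2)) / 18"
    and hn2: "n \<noteq> 2" and hn1: "n + 1 \<noteq> 0"
  shows "(1*(n^3/6) + n*(n^2/2) + (n^2/2)*n + (n^3/6)*1 - P0c n r s t u*(n^3/6) - P1c n r s t u*(1*(n^3/6) + 1*(n^2/2) + (1/2)*n + (1/6)*1) + D1c n r s t u*(1/6) + D2c n r s t u*(1*(1/6) + 1*(1/2) + (1/2)*1 + (1/6)*1)) = 0"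
proof -
  define d1 where "d1 = (2 - n) * (n + 1)"
  define d2 where "d2 = n - 2"
  have d1nz: "d1 \<noteq> 0" using hn2 hn1 unfolding d1_def by simp
  have d2nz: "d2 \<noteq> 0" using hn2 unfolding d2_def by simp
  have hs': "s = 18 / d1 - r" using hs unfolding d1_def by simp
  have hu': "u = (- (n - 2) * (n + 1) * r ^ 2 - 6 * (n + 4) * r + 9 * (n - 14) / d2) / 18" using hu unfolding d2_def by simp
  show ?thesis unfolding coef_defs hs' hu' ht using d1nz d2nz
    apply (simp add: field_simps)
    unfolding d1_def d2_def by algebra
qed

lemma ck4:
  fixes n r s t u :: complex
  assumes hs: "s = 18 / ((2 - n) * (n + 1)) - r"
    and ht: "t = (9 - (n + 1) * r * ((n - 2) * r + 6)) / 18"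
    and hu: "u = (- (n - 2) * (n + 1) * r ^ 2 - 6 * (n + 4) * r + 9 * (n - 14) / (n - 2)) / 18"
    and hn2: "n \<noteq> 2" and hn1: "n + 1 \<noteq> 0"
  shows "(1*(n^4/24) + n*(n^3/6) + (n^2/2)*(n^2/2) + (n^3/6)*n + (n^4/24)*1 - P0c n r s t u*(n^4/24) - P1c n r s t u*(1*(n^4/24) + 1*(n^3/6) + (1/2)*(n^2/2) + (1/6)*n + (1/24)*1) + D1c n r s t u*(1/24) + D2c n r s t u*(1*(1/24) + 1*(1/6) + (1/2)*(1/2) + (1/6)*1 + (1/24)*1)) = 0"
proof -
  define d1 where "d1 = (2 - n) * (n + 1)"
  define d2 where "d2 = n - 2"
  have d1nz: "d1 \<noteq> 0" using hn2 hn1 unfolding d1_def by simp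
  have d2nz: "d2 \<noteq> 0" using hn2 unfolding d2_def by simp
  have hs': "s = 18 / d1 - r" using hs unfolding d1_def by simp
  have hu': "u = (- (n - 2) * (n + 1) * r ^ 2 - 6 * (n + 4) * r + 9 * (n - 14) / d2) / 18" using hu unfolding d2_def by simp
  show ?thesis unfolding coef_defs hs' hu' ht using d1nz d2nz
    apply (simp add: field_simps)
    unfolding d1_def d2_def by algebra
qed

lemma ck5:
  fixes n r s t u :: complex
  assumes hs: "s = 18 / ((2 - n) * (n + 1)) - r"
    and ht: "t = (9 - (n + 1) * r * ((n - 2) * r + 6)) / 18"
    and hu: "u = (- (n - 2) * (n + 1) * r ^ 2 - 6 * (n + 4) * r + 9 * (n - 14) / (n - 2)) / 18"
    and hn2: "n \<noteq> 2" and hn1: "n + 1 \<noteq> 0"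
  shows "(1*(n^5/120 - n*(2*n^4 - 5*n^3 + 5*n - 2)/540) + n*(n^4/24) + (n^2/2)*(n^3/6) + (n^3/6)*(n^2/2) + (n^4/24)*n + (n^5/120 - n*(2*n^4 - 5*n^3 + 5*n - 2)/540)*1 - P0c n r s t u*(n^5/120 - n*(2*n^4 - 5*n^3 + 5*n - 2)/540) - P1c n r s t u*(1*(n^5/120 - n*(2*n^4 - 5*n^3 + 5*n - 2)/540) + 1*(n^4/24) + (1/2)*(n^3/6) + (1/6)*(n^2/2) + (1/24)*n + (1/120)*1) + D1c n r s t u*(1/120) + D2c n r s t u*(1*(1/120) + 1*(1/24) + (1/2)*(1/6) + (1/6)*(1/2) + (1/24)*1 + (1/120)*1)) = 0"
proof -
  define d1 where "d1 = (2 - n) * (n + 1)"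
  define d2 where "d2 = n - 2"
  have d1nz: "d1 \<noteq> 0" using hn2 hn1 unfolding d1_def by simp
  have d2nz: "d2 \<noteq> 0" using hn2 unfolding d2_def by simp
  have hs': "s = 18 / d1 - r" using hs unfolding d1_def by simp
  have hu': "u = (- (n - 2) * (n + 1) * r ^ 2 - 6 * (n + 4) * r + 9 * (n - 14) / d2) / 18" using hu unfolding d2_def by simp
  show ?thesis unfolding coef_defs hs' hu' ht using d1nz d2nz
    apply (simp add: field_simps)
    unfolding d1_def d2_def by algebra
qed

definition ETp :: "complex \<Rightarrow> complex \<Rightarrow> complex" where
  "ETp n x = 1 + n*x + (n^2/2)*x^2 + (n^3/6)*x^3 + (n^4/24)*x^4 + (n^5/120 - n*(2*n^4 - 5*n^3 + 5*n - 2)/540)*x^5"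
definition ZTp :: "complex \<Rightarrow> complex" where
  "ZTp x = 1 + 1*x + (1/2)*x^2 + (1/6)*x^3 + (1/24)*x^4 + (1/120)*x^5"
definition Hp :: "complex \<Rightarrow> complex \<Rightarrow> complex \<Rightarrow> complex \<Rightarrow> complex \<Rightarrow> complex \<Rightarrow> complex" where
  "Hp n r s t u x = x^0*(n*(n^5/120 - n*(2*n^4 - 5*n^3 + 5*n - 2)/540) + (n^2/2)*(n^4/24) + (n^3/6)*(n^3/6) + (n^4/24)*(n^2/2) + (n^5/120 - n*(2*n^4 - 5*n^3 + 5*n - 2)/540)*n - P1c n r s t u*(1*(n^5/120 - n*(2*n^4 - 5*n^3 + 5*n - 2)/540) + (1/2)*(n^4/24) + (1/6)*(n^3/6) + (1/24)*(n^2/2) + (1/120)*n) + D2c n r s t u*(1*(1/120) + (1/2)*(1/24) + (1/6)*(1/6) + (1/24)*(1/2) + (1/120)*1)) + x^1*((n^2/2)*(n^5/120 - n*(2*n^4 - 5*n^3 + 5*n - 2)/540) + (n^3/6)*(n^4/24) + (n^4/24)*(n^3/6) + (n^5/120 - n*(2*n^4 - 5*n^3 + 5*n - 2)/540)*(n^2/2) - P1c n r s t u*((1/2)*(n^5/120 - n*(2*n^4 - 5*n^3 + 5*n - 2)/540) + (1/6)*(n^4/24) + (1/24)*(n^3/6) + (1/120)*(n^2/2)) + D2c n r s t u*((1/2)*(1/120) + (1/6)*(1/24) + (1/24)*(1/6) + (1/120)*(1/2))) + x^2*((n^3/6)*(n^5/120 - n*(2*n^4 - 5*n^3 + 5*n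 - 2)/540) + (n^4/24)*(n^4/24) + (n^5/120 - n*(2*n^4 - 5*n^3 + 5*n - 2)/540)*(n^3/6) - P1c n r s t u*((1/6)*(n^5/120 - n*(2*n^4 - 5*n^3 + 5*n - 2)/540) + (1/24)*(n^4/24) + (1/120)*(n^3/6)) + D2c n r s t u*((1/6)*(1/120) + (1/24)*(1/24) + (1/120)*(1/6))) + x^3*((n^4/24)*(n^5/120 - n*(2*n^4 - 5*n^3 + 5*n - 2)/540) + (n^5/120 - n*(2*n^4 - 5*n^3 + 5*n - 2)/540)*(n^4/24) - P1c n r s t u*((1/24)*(n^5/120 - n*(2*n^4 - 5*n^3 + 5*n - 2)/540) + (1/120)*(n^4/24)) + D2c n r s t u*((1/24)*(1/120) + (1/120)*(1/24))) + x^4*((n^5/120 - n*(2*n^4 - 5*n^3 + 5*n - 2)/540)*(n^5/120 - n*(2*n^4 - 5*n^3 + 5*n - 2)/540) - P1c n r s t u*((1/120)*(n^5/120 - n*(2*n^4 - 5*n^3 + 5*n - 2)/540)) + D2c n r s t u*((1/120)*(1/120)))"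

lemma pc_poly:
  fixes n r s t u :: complex
  assumes hs: "s = 18 / ((2 - n) * (n + 1)) - r"
    and ht: "t = (9 - (n + 1) * r * ((n - 2) * r + 6)) / 18"
    and hu: "u = (- (n - 2) * (n + 1) * r ^ 2 - 6 * (n + 4) * r + 9 * (n - 14) / (n - 2)) / 18"
    and hn2: "n \<noteq> 2" and hn1: "n + 1 \<noteq> 0"
  shows "pc n r s t u (ETp n x) (ZTp x) = x^6 * Hp n r s t u x"
  unfolding pc_def ETp_def ZTp_def Hp_def
  by (rule gen_id0[OF ck0[OF assms] ck1[OF assms] ck2[OF assms] ck3[OF assms] ck4[OF assms] ck5[OF assms]])

lemma sum5: "(\<Sum>k\<le>5. (w::complex)^k / fact k) = 1 + w + w^2/2 + w^3/6 + w^4/24 + w^5/120"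
  by (simp add: eval_nat_numeral)

lemma taylor_im:
  fixes w :: complex
  assumes "Re w = 0"
  shows "norm (exp w - (1 + w + w^2/2 + w^3/6 + w^4/24 + w^5/120)) \<le> norm w ^ 6 / 120"
proof -
  have "norm (exp w - (\<Sum>k\<le>5. w^k / fact k)) \<le> exp \<bar>Re w\<bar> * norm w ^ Suc 5 / fact 5"
    by (rule Taylor_exp)
  then show ?thesis using assms by (simp add: sum5 eval_nat_numeral)
qed

lemma pow6_i: "(- \<i> * (w::complex)) ^ 6 = - (w ^ 6)"
proof -
  have "\<i> ^ 2 = (-1::complex)" by simp
  then show ?thesis by algebra
qed

lemma pow5_i: "(- \<i> * (w::complex)) ^ 5 = - \<i> * (w ^ 5)"
proof -
  have "\<i> ^ 2 = (-1::complex)" by simp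
  then show ?thesis by algebra
qed

lemma eig_char:
  fixes M :: "complex^2^2"
  assumes "is_eigenvalue M mu"
  shows "(M$1$1 - mu) * (M$2$2 - mu) - M$1$2 * M$2$1 = 0"
proof -
  obtain v where v: "v \<noteq> 0" "M *v v = mu *s v" using assms unfolding is_eigenvalue_def by blast
  have e1: "M$1$1 * v$1 + M$1$2 * v$2 = mu * v$1"
    using arg_cong[OF v(2), of "\<lambda>x. x$1"] by (simp add: matrix_vector_mult_def sum_2)
  have e2: "M$2$1 * v$1 + M$2$2 * v$2 = mu * v$2"
    using arg_cong[OF v(2), of "\<lambda>x. x$2"] by (simp add: matrix_vector_mult_def sum_2)
  have a: "((M$1$1 - mu) * (M$2$2 - mu) - M$1$2 * M$2$1) * v$1
      = (M$2$2 - mu) * ((M$1$1 * v$1 + M$1$2 * v$2) - mu * v$1) - M$1$2 * ((M$2$1 * v$1 + M$2$2 * v$2) - mu * v$2)"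
    by (simp add: algebra_simps)
  have b: "((M$1$1 - mu) * (M$2$2 - mu) - M$1$2 * M$2$1) * v$2
      = (M$1$1 - mu) * ((M$2$1 * v$1 + M$2$2 * v$2) - mu * v$2) - M$2$1 * ((M$1$1 * v$1 + M$1$2 * v$2) - mu * v$1)"
    by (simp add: algebra_simps)
  have "v$1 \<noteq> 0 \<or> v$2 \<noteq> 0" using v(1) by (auto simp: vec_eq_iff forall_2)
  then show ?thesis using a b e1 e2 by auto
qed

lemma AF_char:
  assumes "is_eigenvalue (AF_matrix \<nu> R S T U \<theta>) \<mu>"
  shows "pc (complex_of_real \<nu>) (complex_of_real R) (complex_of_real S) (complex_of_real T) (complex_of_real U) \<mu> (exp (- \<i> * complex_of_real \<theta>)) = 0"
proof -
  define M where "M = AF_matrix \<nu> R S T U \<theta>"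
  define n r s t u where "n = complex_of_real \<nu>" and "r = complex_of_real R" and "s = complex_of_real S"
    and "t = complex_of_real T" and "u = complex_of_real U"
  define z where "z = exp (- \<i> * complex_of_real \<theta>)"
  have m11: "M$1$1 = 1 - n * (1 + (1 - n) * (u - t)) * (1 - z)"
    by (simp add: M_def AF_matrix_def Let_def n_def t_def u_def z_def)
  have m12: "M$1$2 = n * (1 - n) * (u * z - t) * (1 - z)"
    by (simp add: M_def AF_matrix_def Let_def n_def t_def u_def z_def)
  have m21: "M$2$1 = n * (1 - n) * (r + s)"
    by (simp add: M_def AF_matrix_def Let_def n_def r_def s_def)
  have m22: "M$2$2 = (1 - n) * (1 - n * r) + n * (1 - (1 - n) * s) * z"
    by (simp add: M_def AF_matrix_def Let_def n_def r_def s_def z_def)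
  have "(M$1$1 - \<mu>) * (M$2$2 - \<mu>) - M$1$2 * M$2$1 = 0"
    using eig_char assms unfolding M_def by blast
  moreover have "(M$1$1 - \<mu>) * (M$2$2 - \<mu>) - M$1$2 * M$2$1 = pc n r s t u \<mu> z"
    unfolding m11 m12 m21 m22 pc_def coef_defs by algebra
  ultimately show ?thesis unfolding n_def r_def s_def t_def u_def z_def by simp
qed

lemma bigo1_tendsto:
  fixes f :: "'a \<Rightarrow> complex"
  assumes "(f \<longlongrightarrow> c) F"
  shows "f \<in> O[F](\<lambda>_. 1)"
  using bigoI_tendsto[where f=f and g="\<lambda>_. 1" and F=F and c=c] assms by simp

lemma isCont_bigo1:
  fixes f :: "real \<Rightarrow> complex"
  assumes "isCont f a"
  shows "f \<in> O[at a](\<lambda>_. 1)"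
  using assms bigo1_tendsto unfolding isCont_def by blast

lemma O_mult1:
  fixes f h :: "'a \<Rightarrow> complex"
  assumes "f \<in> O[F](g)" "h \<in> O[F](\<lambda>_. 1)"
  shows "(\<lambda>x. f x * h x) \<in> O[F](g)"
  using landau_o.big.mult[OF assms] by simp


lemma ZTp_eq: "ZTp w = 1 + w + w^2/2 + w^3/6 + w^4/24 + w^5/120"
  by (simp add: ZTp_def field_simps)

lemma ETp_eq: "ETp n w = (1 + n*w + (n*w)^2/2 + (n*w)^3/6 + (n*w)^4/24 + (n*w)^5/120) - n * (2*n^4 - 5*n^3 + 5*n - 2) / 540 * w^5"
  by (simp add: ETp_def field_simps power_mult_distrib)

lemma cancel5: "(1/540) * \<i> * c * X^5 + c/540 * (-\<i> * X^5) = (0::complex)"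
  by (simp add: field_simps)

theorem mainTheorem2:
  fixes \<nu> R S T U :: real and lam :: "real \<Rightarrow> complex"
  assumes "0 < \<nu>" "\<nu> < 1"
    and "R > 0" "S > 0" "T > 0" "U > 0"
    and "S = 18 / (- (\<nu> ^ 2) + \<nu> + 2) - R"
    and "T = (9 - (\<nu> + 1) * R * ((\<nu> - 2) * R + 6)) / 18"
    and "U = (- (\<nu> - 2) * (\<nu> + 1) * R ^ 2 - 6 * (\<nu> + 4) * R + 9 * (\<nu> - 14) / (\<nu> - 2)) / 18"
    and "\<forall>\<^sub>F \<theta> in nhds 0. is_eigenvalue (AF_matrix \<nu> R S T U \<theta>) (lam \<theta>)"
    and "isCont lam 0"
    and "lam 0 = 1"
  shows "(\<lambda>\<theta>. lam \<theta> - exp (- \<i> * complex_of_real (\<nu> * \<theta>))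
            - (1/540) * \<i> * complex_of_real (\<nu> * (2*\<nu> ^ 4 - 5*\<nu> ^ 3 + 5*\<nu> - 2)) * complex_of_real \<theta> ^ 5)
         \<in> O[at (0::real)](\<lambda>\<theta>. complex_of_real \<theta> ^ 6)"
proof -
  define q where "q = 2*\<nu> ^ 4 - 5*\<nu> ^ 3 + 5*\<nu> - 2"
  define n where "n = complex_of_real \<nu>"
  define r where "r = complex_of_real R"
  define s where "s = complex_of_real S"
  define t where "t = complex_of_real T"
  define u where "u = complex_of_real U"
  have hn2: "n \<noteq> 2"
  proof
    assume "n = 2"
    then have "complex_of_real \<nu> = complex_of_real 2" by (simp add: n_def)
    then have "\<nu> = 2" by (simp only: of_real_eq_iff)
    then show False using assms(2) by simp
  qed
  have hn1: "n + 1 \<noteq> 0"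
  proof
    assume "n + 1 = 0"
    then have "complex_of_real (\<nu> + 1) = 0" by (simp add: n_def)
    then have "\<nu> + 1 = 0" by (simp only: of_real_eq_0_iff)
    then show False using assms(1) by simp
  qed
  have den: "- (\<nu> ^ 2) + \<nu> + 2 = (2 - \<nu>) * (\<nu> + 1)" by algebra
  have hs: "s = 18 / ((2 - n) * (n + 1)) - r"
    unfolding s_def n_def r_def assms(7) den by simp
  have ht: "t = (9 - (n + 1) * r * ((n - 2) * r + 6)) / 18"
    unfolding t_def n_def r_def assms(8) by simp
  have hu: "u = (- (n - 2) * (n + 1) * r ^ 2 - 6 * (n + 4) * r + 9 * (n - 14) / (n - 2)) / 18"
    unfolding u_def n_def r_def assms(9) by simp
  define y where "y \<theta> = - \<i> * complex_of_real \<theta>" for \<theta>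
  define z where "z \<theta> = exp (y \<theta>)" for \<theta>
  define E where "E \<theta> = exp (- \<i> * complex_of_real (\<nu> * \<theta>)) + (1/540) * \<i> * complex_of_real (\<nu> * q) * complex_of_real \<theta> ^ 5" for \<theta>
  define p where "p \<mu> w = pc n r s t u \<mu> w" for \<mu> w
  define ZT where "ZT \<theta> = ZTp (y \<theta>)" for \<theta>
  define ET where "ET \<theta> = ETp n (y \<theta>)" for \<theta>
  define l2 where "l2 \<theta> = P0c n r s t u + P1c n r s t u * z \<theta> - lam \<theta>" for \<theta>
  define \<kappa> where "\<kappa> = n * (1 - n) * (r + s)"
  define F1 where "F1 \<theta> = E \<theta> + ET \<theta> - P0c n r s t u - P1c n r s t u * z \<theta>" for \<theta>
  define F2 where "F2 \<theta> = D1c n r s t u + D2c n r s t u * (z \<theta> + ZT \<theta>) - P1c n r s t u * ET \<theta>" for \<theta>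
  define Hm where "Hm \<theta> = - Hp n r s t u (y \<theta>)" for \<theta>

  have goal_eq: "(\<lambda>\<theta>. lam \<theta> - exp (- \<i> * complex_of_real (\<nu> * \<theta>))
            - (1/540) * \<i> * complex_of_real (\<nu> * (2*\<nu> ^ 4 - 5*\<nu> ^ 3 + 5*\<nu> - 2)) * complex_of_real \<theta> ^ 5)
      = (\<lambda>\<theta>. - (E \<theta> - lam \<theta>))"
    by (rule ext) (simp add: E_def q_def algebra_simps)

  have ev_char: "eventually (\<lambda>\<theta>. p (lam \<theta>) (z \<theta>) = 0) (at 0)"
  proof -
    have "eventually (\<lambda>\<theta>. is_eigenvalue (AF_matrix \<nu> R S T U \<theta>) (lam \<theta>)) (at 0)"
      using assms(10) unfolding eventually_at_filter by (rule eventually_mono) simp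
    then show ?thesis
    proof (rule eventually_mono)
      fix \<theta> assume "is_eigenvalue (AF_matrix \<nu> R S T U \<theta>) (lam \<theta>)"
      from AF_char[OF this] show "p (lam \<theta>) (z \<theta>) = 0"
        by (simp add: p_def z_def y_def n_def r_def s_def t_def u_def)
    qed
  qed

  have fac: "p (E \<theta>) (z \<theta>) = (E \<theta> - lam \<theta>) * (E \<theta> - l2 \<theta>) + p (lam \<theta>) (z \<theta>)" for \<theta>
    unfolding p_def pc_def l2_def by algebra

  have cont_z: "isCont z 0" unfolding z_def y_def by (intro continuous_intros)
  have cont_E: "isCont E 0" unfolding E_def by (intro continuous_intros)
  have cont_ZT: "isCont ZT 0" unfolding ZT_def ZTp_def y_def by (intro continuous_intros)
  have cont_ET: "isCont ET 0" unfolding ET_def ETp_def y_def by (intro continuous_intros)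
  have cont_Hm: "isCont Hm 0" unfolding Hm_def Hp_def y_def by (intro continuous_intros)
  have cont_F1: "isCont F1 0" unfolding F1_def by (intro continuous_intros cont_E cont_ET cont_z)
  have cont_F2: "isCont F2 0" unfolding F2_def by (intro continuous_intros cont_ET cont_ZT cont_z)
  have z0: "z 0 = 1" by (simp add: z_def y_def)
  have E0: "E 0 = 1" by (simp add: E_def)
  have lam_lim: "(lam \<longlongrightarrow> 1) (at 0)" using assms(11,12) by (simp add: isCont_def)
  have z_lim: "(z \<longlongrightarrow> 1) (at 0)" using cont_z z0 by (simp add: isCont_def)
  have E_lim: "(E \<longlongrightarrow> 1) (at 0)" using cont_E E0 by (simp add: isCont_def)
  have lim1: "((\<lambda>\<theta>. E \<theta> - l2 \<theta>) \<longlongrightarrow> 1 - (P0c n r s t u + P1c n r s t u * 1 - 1)) (at 0)"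
    unfolding l2_def by (intro tendsto_intros E_lim z_lim lam_lim)
  have eqk: "1 - (P0c n r s t u + P1c n r s t u * 1 - 1) = \<kappa>"
    unfolding \<kappa>_def coef_defs by algebra
  have D_lim: "((\<lambda>\<theta>. E \<theta> - l2 \<theta>) \<longlongrightarrow> \<kappa>) (at 0)"
    using lim1 unfolding eqk .
  have k_eq: "\<kappa> = complex_of_real (\<nu> * (1 - \<nu>) * (R + S))" by (simp add: \<kappa>_def n_def r_def s_def)
  have kpos: "\<nu> * (1 - \<nu>) * (R + S) > 0" using assms(1,2,3,4) by (intro mult_pos_pos) auto
  have knz: "\<kappa> \<noteq> 0" unfolding k_eq of_real_eq_0_iff using kpos by linarith
  have nz_ev: "eventually (\<lambda>\<theta>. E \<theta> - l2 \<theta> \<noteq> 0) (at 0)"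
    using tendsto_imp_eventually_ne[OF D_lim knz] .
  have inv_O: "(\<lambda>\<theta>. 1 / (E \<theta> - l2 \<theta>)) \<in> O[at 0](\<lambda>_. 1)"
    by (rule bigo1_tendsto[OF tendsto_divide[OF tendsto_const D_lim knz]])

  have Z_O: "(\<lambda>\<theta>. z \<theta> - ZT \<theta>) \<in> O[at 0](\<lambda>\<theta>. complex_of_real \<theta> ^ 6)"
  proof (rule bigoI[where c="1/120"], rule always_eventually, rule allI)
    fix \<theta> :: real
    have "norm (z \<theta> - ZT \<theta>) = norm (exp (y \<theta>) - (1 + y \<theta> + (y \<theta>)^2/2 + (y \<theta>)^3/6 + (y \<theta>)^4/24 + (y \<theta>)^5/120))"
      unfolding z_def ZT_def ZTp_eq by simp
    also have "\<dots> \<le> norm (y \<theta>) ^ 6 / 120" by (rule taylor_im) (simp add: y_def)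
    also have "\<dots> = 1/120 * norm (complex_of_real \<theta> ^ 6)" by (simp add: y_def norm_mult norm_power)
    finally show "norm (z \<theta> - ZT \<theta>) \<le> 1/120 * norm (complex_of_real \<theta> ^ 6)" .
  qed

  have E_O: "(\<lambda>\<theta>. E \<theta> - ET \<theta>) \<in> O[at 0](\<lambda>\<theta>. complex_of_real \<theta> ^ 6)"
  proof (rule bigoI[where c="\<bar>\<nu>\<bar>^6/120"], rule always_eventually, rule allI)
    fix \<theta> :: real
    define W where "W = n * y \<theta>"
    have y5: "(y \<theta>)^5 = -\<i> * (complex_of_real \<theta>)^5" unfolding y_def by (rule pow5_i)
    have nq: "complex_of_real (\<nu> * q) = n * (2*n^4 - 5*n^3 + 5*n - 2)" by (simp add: n_def q_def)
    have ny: "- \<i> * complex_of_real (\<nu> * \<theta>) = W" by (simp add: n_def y_def W_def)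
    have "E \<theta> - ET \<theta> = (exp W + (1/540) * \<i> * (n * (2*n^4 - 5*n^3 + 5*n - 2)) * complex_of_real \<theta> ^ 5)
        - ((1 + W + W^2/2 + W^3/6 + W^4/24 + W^5/120) - n * (2*n^4 - 5*n^3 + 5*n - 2) / 540 * (-\<i> * (complex_of_real \<theta>)^5))"
      unfolding E_def ET_def ETp_eq y5 ny nq W_def[symmetric] ..
    also have "\<dots> = exp W - (1 + W + W^2/2 + W^3/6 + W^4/24 + W^5/120)
       + ((1/540) * \<i> * (n * (2*n^4 - 5*n^3 + 5*n - 2)) * complex_of_real \<theta> ^ 5
          + (n * (2*n^4 - 5*n^3 + 5*n - 2)) / 540 * (-\<i> * (complex_of_real \<theta>)^5))"
      by (simp add: algebra_simps)
    also have "\<dots> = exp W - (1 + W + W^2/2 + W^3/6 + W^4/24 + W^5/120)"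
      using cancel5 by simp
    finally have eq: "E \<theta> - ET \<theta> = exp W - (1 + W + W^2/2 + W^3/6 + W^4/24 + W^5/120)" .
    have "norm (E \<theta> - ET \<theta>) \<le> norm W ^ 6 / 120"
      unfolding eq by (rule taylor_im) (simp add: W_def n_def y_def)
    also have "\<dots> = \<bar>\<nu>\<bar>^6/120 * norm (complex_of_real \<theta> ^ 6)"
      by (simp add: W_def n_def y_def norm_mult norm_power power_mult_distrib)
    finally show "norm (E \<theta> - ET \<theta>) \<le> \<bar>\<nu>\<bar>^6/120 * norm (complex_of_real \<theta> ^ 6)" .
  qed

  have x6_O: "(\<lambda>\<theta>. complex_of_real \<theta> ^ 6) \<in> O[at 0](\<lambda>\<theta>. complex_of_real \<theta> ^ 6)"
    by (rule bigoI[where c=1]) simp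

  have split: "p (E \<theta>) (z \<theta>) = (E \<theta> - ET \<theta>) * F1 \<theta> + (z \<theta> - ZT \<theta>) * F2 \<theta> + complex_of_real \<theta> ^ 6 * Hm \<theta>" for \<theta>
  proof -
    have P: "p (ET \<theta>) (ZT \<theta>) = complex_of_real \<theta> ^ 6 * Hm \<theta>"
    proof -
      have "p (ET \<theta>) (ZT \<theta>) = (y \<theta>)^6 * Hp n r s t u (y \<theta>)"
        unfolding p_def ET_def ZT_def by (rule pc_poly[OF hs ht hu hn2 hn1])
      also have "(y \<theta>)^6 = - (complex_of_real \<theta> ^ 6)" unfolding y_def by (rule pow6_i)
      finally show ?thesis by (simp add: Hm_def)
    qed
    have "p (E \<theta>) (z \<theta>) = (E \<theta> - ET \<theta>) * F1 \<theta> + (z \<theta> - ZT \<theta>) * F2 \<theta> + p (ET \<theta>) (ZT \<theta>)"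
      unfolding p_def pc_def F1_def F2_def by algebra
    then show ?thesis using P by simp
  qed

  have pO: "(\<lambda>\<theta>. p (E \<theta>) (z \<theta>)) \<in> O[at 0](\<lambda>\<theta>. complex_of_real \<theta> ^ 6)"
  proof -
    have a: "(\<lambda>\<theta>. (E \<theta> - ET \<theta>) * F1 \<theta>) \<in> O[at 0](\<lambda>\<theta>. complex_of_real \<theta> ^ 6)"
      by (rule O_mult1[OF E_O isCont_bigo1[OF cont_F1]])
    have b: "(\<lambda>\<theta>. (z \<theta> - ZT \<theta>) * F2 \<theta>) \<in> O[at 0](\<lambda>\<theta>. complex_of_real \<theta> ^ 6)"
      by (rule O_mult1[OF Z_O isCont_bigo1[OF cont_F2]])
    have c: "(\<lambda>\<theta>. complex_of_real \<theta> ^ 6 * Hm \<theta>) \<in> O[at 0](\<lambda>\<theta>. complex_of_real \<theta> ^ 6)"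
      by (rule O_mult1[OF x6_O isCont_bigo1[OF cont_Hm]])
    have "(\<lambda>\<theta>. (E \<theta> - ET \<theta>) * F1 \<theta> + (z \<theta> - ZT \<theta>) * F2 \<theta> + complex_of_real \<theta> ^ 6 * Hm \<theta>)
          \<in> O[at 0](\<lambda>\<theta>. complex_of_real \<theta> ^ 6)"
      by (intro sum_in_bigo(1) a b c)
    then show ?thesis by (simp only: split)
  qed

  have fin_ev: "eventually (\<lambda>\<theta>. - (E \<theta> - lam \<theta>) = - (p (E \<theta>) (z \<theta>) * (1 / (E \<theta> - l2 \<theta>)))) (at 0)"
    using ev_char nz_ev by eventually_elim (simp add: fac)
  have "(\<lambda>\<theta>. - (p (E \<theta>) (z \<theta>) * (1 / (E \<theta> - l2 \<theta>)))) \<in> O[at 0](\<lambda>\<theta>. complex_of_real \<theta> ^ 6)"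
    using O_mult1[OF pO inv_O] by simp
  then have "(\<lambda>\<theta>. - (E \<theta> - lam \<theta>)) \<in> O[at 0](\<lambda>\<theta>. complex_of_real \<theta> ^ 6)"
    using landau_o.big.in_cong[OF fin_ev] by blast
  then show ?thesis unfolding goal_eq .
qed

end
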